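(* Fix a nominal state-control pair $p_k=(z_k,v_k)\in\mathbb{R}^{n_x+n_u}$ and calibration pairs $(x_i,u_i)$, $i=1,\dots,n$, with $n\ge 2$. Let $d_i:=\|[z_k^\top,v_k^\top]-[x_i^\top,u_i^\top]\|_2$ and assume the indices are ordered so that $d_1\le d_2\le\dots\le d_n$. Put $d_{\min}:=\min_{1\le i\le n-1}(d_{i+1}-d_i)$ and $d_{\max}:=\max_{1\le i\le n-1}(d_{i+1}-d_i)$, and assume $d_{\min}>0$. Let $\rho\in(0,1)$ and $\tilde w_i:=\rho^{d_i}/(1+\sum_{j=1}^n\rho^{d_j})$. Let $s_{1,k},\dots,s_{n,k},s_{k,k}$ be mutually independent real-valued random variables, where $s_{i,k}\sim S_{i,k}$ and $s_{k,k}\sim S_{k,k}$. Assume that for some $\epsilon>0$ and every $i$, $$d_{\mathrm{TV}}(S_{i,k},S_{k,k})\le \epsilon\, d_i .$$ Let $S^{k,k}$ be the joint law of $(s_{1,k},\dots,s_{n,k},s_{k,k})$, and let $S^{i,k}$ be the joint law of the vector obtained from it by swapping the entries $s_{i,k}$ and $s_{k,k}$. Then the coverage gap $\sum_{i=1}^n\tilde w_i\, d_{\mathrm{TV}}(S^{i,k},S^{k,k})$ satisfies $$\sum_{i=1}^n\tilde w_i\, d_{\mathrm{TV}}(S^{i,k},S^{k,k})\;\le\;\sum_{i=1}^n\frac{\rho^{d_i}}{1+\sum_{j=1}^n\rho^{d_j}}\cdot 2\epsilon\, d_i\;\le\;2\epsilon\left[\frac{d_1}{1-\rho^{d_{\m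in}}}+\frac{d_{\max}\,\rho^{d_{\min}}}{(1-\rho^{d_{\min}})^2}\right].$$
   Context: $d_{\mathrm{TV}}$ denotes the total-variation distance between probability distributions. The random variables are interpreted as nonconformity scores: $s_{i,k}$ is the score of calibration point $i$, and $s_{k,k}$ is the (unknown) score at the nominal point $(z_k,v_k)$. The normalized weights $\tilde w_i$ come from the unnormalized weights $w_i=\rho^{d_i}$ together with a test weight $w_{\mathrm{test}}=1$. The test point receives normalized weight $\tilde w_{\mathrm{test}}=1/(1+\sum_j\rho^{d_j})$. *)

theory Defs
  imports "HOL-Probability.Probability"
begin

definition tv_dist :: "'a measure \<Rightarrow> 'a measure \<Rightarrow> real" where
  "tv_dist P Q = (SUP A\<in>sets P. \<bar>measure P A - measure Q A\<bar>)"

text \<open>Index 0 stands for the nominal/test index k; indices 1..n are calibration points.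
swap_idx i exchanges positions i and 0.\<close>
definition swap_idx :: "nat \<Rightarrow> nat \<Rightarrow> nat" where
  "swap_idx i j = (if j = i then 0 else if j = 0 then i else j)"

end

theory Submission
  imports Defs
begin

lemma tv_ge:
  assumes P: "prob_space P" and Q: "prob_space Q" and A: "A \<in> sets P"
  shows "\<bar>measure P A - measure Q A\<bar> \<le> tv_dist P Q"
  unfolding tv_dist_def
proof (rule cSUP_upper[OF A])
  have "\<bar>measure P B - measure Q B\<bar> \<le> 1" for B
    using prob_space.prob_le_1[OF P, of B] prob_space.prob_le_1[OF Q, of B]
      measure_nonneg[of P B] measure_nonneg[of Q B] by linarith
  then show "bdd_above ((\<lambda>A. \<bar>measure P A - measure Q A\<bar>) ` sets P)"
    by (intro bdd_aboveI2) auto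
qed

lemma tv_le:
  assumes "\<And>A. A \<in> sets P \<Longrightarrow> \<bar>measure P A - measure Q A\<bar> \<le> c"
  shows "tv_dist P Q \<le> c"
  unfolding tv_dist_def
  by (rule cSUP_least) (use assms sets.empty_sets in auto)

lemma one_coord:
  fixes Mf Mf' :: "'i \<Rightarrow> 'a measure"
  assumes fin: "finite I" and kI: "k \<in> I"
    and P: "\<And>j. prob_space (Mf j)" and P': "\<And>j. prob_space (Mf' j)"
    and eq: "\<And>j. j \<noteq> k \<Longrightarrow> Mf' j = Mf j" and sk: "sets (Mf' k) = sets (Mf k)"
    and A: "A \<in> sets (PiM I Mf)"
  shows "\<bar>measure (PiM I Mf) A - measure (PiM I Mf') A\<bar> \<le> tv_dist (Mf k) (Mf' k)"
proof -
  define J where "J = I - {k}"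
  have IJ: "I = insert k J" "k \<notin> J" "finite J" using kI fin by (auto simp: J_def)
  interpret ps: product_sigma_finite Mf
    by (simp add: product_sigma_finite_def prob_space_imp_sigma_finite P)
  interpret ps': product_sigma_finite Mf'
    by (simp add: product_sigma_finite_def prob_space_imp_sigma_finite P')
  interpret pk: prob_space "Mf k" by (rule P)
  interpret pk': prob_space "Mf' k" by (rule P')
  have PJ: "PiM J Mf' = PiM J Mf" by (rule PiM_cong) (use eq IJ(2) in metis)+
  interpret pJ: prob_space "PiM J Mf" by (rule prob_space_PiM) (use P in auto)
  have sI: "sets (PiM I Mf') = sets (PiM I Mf)"
    using sk eq by (intro sets_PiM_cong) (metis)+
  have A': "A \<in> sets (PiM I Mf')" using A sI by simp
  have spk: "space (Mf' k) = space (Mf k)" using sk by (rule sets_eq_imp_space_eq)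
  define g where "g x = measure (Mf k) ((\<lambda>y. x(k:=y)) -` A \<inter> space (Mf k))" for x
  define g' where "g' x = measure (Mf' k) ((\<lambda>y. x(k:=y)) -` A \<inter> space (Mf k))" for x
  have gi: "g x = (\<integral>y. indicator A (x(k:=y)) \<partial>Mf k)" for x
    unfolding g_def by (simp add: indicator_vimage[symmetric])
  have gi': "g' x = (\<integral>y. indicator A (x(k:=y)) \<partial>Mf' k)" for x
    unfolding g'_def by (simp add: indicator_vimage[symmetric] spk)
  have A2: "A \<in> sets (PiM (insert k J) Mf)" using A IJ by simp
  have A2': "A \<in> sets (PiM (insert k J) Mf')" using A' IJ by simp
  have gm: "g \<in> borel_measurable (PiM J Mf)"
    unfolding gi
    by (rule sigma_finite_measure.borel_measurable_lebesgue_integral[OF prob_space_imp_sigma_finite[OF P]]) (use A2 IJ in measurable)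
  have gm': "g' \<in> borel_measurable (PiM J Mf)"
    unfolding gi' PJ[symmetric]
    by (rule sigma_finite_measure.borel_measurable_lebesgue_integral[OF prob_space_imp_sigma_finite[OF P']]) (use A2' IJ in measurable)
  have gint: "integrable (PiM J Mf) g"
    by (rule pJ.integrable_const_bound[where B=1]) (auto simp: g_def gm)
  have gint': "integrable (PiM J Mf) g'"
    by (rule pJ.integrable_const_bound[where B=1]) (auto simp: g'_def gm')
  have m1: "measure (PiM I Mf) A = (\<integral>x. g x \<partial>PiM J Mf)"
  proof -
    have "measure (PiM I Mf) A = (\<integral>x. indicator A x \<partial>PiM (insert k J) Mf)"
      using A IJ by (simp add: sets.Int_space_eq2)
    also have "\<dots> = (\<integral>x. (\<integral>y. indicator A (x(k:=y)) \<partial>Mf k) \<partial>PiM J Mf)"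
    proof (rule ps.product_integral_insert[OF IJ(3,2)])
      have "prob_space (PiM (insert k J) Mf)" by (rule prob_space_PiM) (use P in auto)
      then have "emeasure (PiM (insert k J) Mf) A \<noteq> \<infinity>"
        by (simp add: prob_space.finite_measure finite_measure.emeasure_finite)
      then show "integrable (PiM (insert k J) Mf) (indicator A :: _ \<Rightarrow> real)"
        using A2 by (simp add: less_top)
    qed
    finally show ?thesis by (simp add: gi)
  qed
  have m2: "measure (PiM I Mf') A = (\<integral>x. g' x \<partial>PiM J Mf)"
  proof -
    have "measure (PiM I Mf') A = (\<integral>x. indicator A x \<partial>PiM (insert k J) Mf')"
      using A' IJ by (simp add: sets.Int_space_eq2)
    also have "\<dots> = (\<integral>x. (\<integral>y. indicator A (x(k:=y)) \<partial>Mf' k) \<partial>PiM J Mf')"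
    proof (rule ps'.product_integral_insert[OF IJ(3,2)])
      have "prob_space (PiM (insert k J) Mf')" by (rule prob_space_PiM) (use P' in auto)
      then have "emeasure (PiM (insert k J) Mf') A \<noteq> \<infinity>"
        by (simp add: prob_space.finite_measure finite_measure.emeasure_finite)
      then show "integrable (PiM (insert k J) Mf') (indicator A :: _ \<Rightarrow> real)"
        using A2' by (simp add: less_top)
    qed
    finally show ?thesis by (simp add: gi' PJ)
  qed
  have pt: "\<bar>g x - g' x\<bar> \<le> tv_dist (Mf k) (Mf' k)" if x: "x \<in> space (PiM J Mf)" for x
  proof -
    have "(\<lambda>y. x(k:=y)) \<in> measurable (Mf k) (PiM (insert k J) Mf)"
      by (rule measurable_component_update[OF x IJ(2)])
    then have "(\<lambda>y. x(k:=y)) -` A \<inter> space (Mf k) \<in> sets (Mf k)"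
      using A2 by (rule measurable_sets)
    then show ?thesis unfolding g_def g'_def by (rule tv_ge[OF P P'])
  qed
  have "\<bar>measure (PiM I Mf) A - measure (PiM I Mf') A\<bar> = \<bar>\<integral>x. (g x - g' x) \<partial>PiM J Mf\<bar>"
    using gint gint' by (simp add: m1 m2)
  also have "\<dots> \<le> (\<integral>x. \<bar>g x - g' x\<bar> \<partial>PiM J Mf)"
    by (rule integral_abs_bound)
  also have "\<dots> \<le> (\<integral>x. tv_dist (Mf k) (Mf' k) \<partial>PiM J Mf)"
    by (rule integral_mono) (use gint gint' pt in auto)
  also have "\<dots> = tv_dist (Mf k) (Mf' k)" by (simp add: pJ.prob_space)
  finally show ?thesis .
qed
lemma geo_sum_bound:
  fixes r :: real assumes "0 \<le> r" "r < 1"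
  shows "(\<Sum>m<n. r^m) \<le> 1/(1-r)"
proof -
  have "(\<Sum>m<n. r^m) * (1-r) = 1 - r^n"
  proof (induction n)
    case (Suc n)
    have "(\<Sum>m<Suc n. r^m) * (1-r) = (\<Sum>m<n. r^m) * (1-r) + r^n * (1-r)"
      by (simp add: distrib_right)
    also have "\<dots> = 1 - r^Suc n" using Suc by (simp add: algebra_simps)
    finally show ?case .
  qed simp
  moreover have "0 \<le> r^n" using assms by simp
  ultimately have "(\<Sum>m<n. r^m) * (1-r) \<le> 1" by linarith
  then show ?thesis using assms by (simp add: field_simps)
qed

lemma ari_geo_sum_bound:
  fixes r :: real assumes "0 \<le> r" "r < 1"
  shows "(\<Sum>m<n. real m * r^m) \<le> r/(1-r)^2"
proof -
  have eq: "(\<Sum>m<n. real m * r^m) * (1-r)^2 = r - real n * r^n + (real n - 1) * r^(n+1)"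
    by (induction n) (auto simp: algebra_simps power2_eq_square)
  have "(real n - 1) * r^(n+1) \<le> real n * r^n"
  proof -
    have "(real n - 1) * r^(n+1) \<le> real n * r^(n+1)" using assms by (simp add: mult_right_mono)
    also have "\<dots> \<le> real n * r^n" using assms by (intro mult_left_mono) (auto simp: power_le_one mult_left_le_one_le)
    finally show ?thesis .
  qed
  then have "(\<Sum>m<n. real m * r^m) * (1-r)^2 \<le> r" using eq by linarith
  moreover have "(1-r)^2 > 0" using assms by simp
  ultimately show ?thesis by (simp add: field_simps)
qed

lemma part2:
  fixes d :: "nat \<Rightarrow> real" and \<rho> \<epsilon> dmin dmax :: real
  assumes rho: "0 < \<rho>" "\<rho> < 1" and eps: "\<epsilon> > 0"
    and dnn: "\<And>i. d i \<ge> 0"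
    and gaps: "\<And>m. 1 \<le> m \<Longrightarrow> m < n \<Longrightarrow> dmin \<le> d (Suc m) - d m \<and> d (Suc m) - d m \<le> dmax"
    and dmin: "dmin > 0" and dmax: "dmax \<ge> 0"
  shows "(\<Sum>i=1..n. (\<rho> powr d i / (1 + (\<Sum>j=1..n. \<rho> powr d j))) * (2 * \<epsilon> * d i))
         \<le> 2 * \<epsilon> * (d 1 / (1 - \<rho> powr dmin) + dmax * \<rho> powr dmin / (1 - \<rho> powr dmin)^2)"
proof -
  define r where "r = \<rho> powr dmin"
  have r: "0 < r" "r < 1" unfolding r_def using rho dmin powr_less_mono'[of \<rho> 0 dmin] by auto
  define D where "D = 1 + (\<Sum>j=1..n. \<rho> powr d j)"
  have D: "D \<ge> 1" unfolding D_def by (auto intro: sum_nonneg)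
  have lo: "d (Suc m) \<ge> d 1 + real m * dmin" and hi: "d (Suc m) \<le> d 1 + real m * dmax"
    if "Suc m \<le> n" for m
    using that
  proof (induction m)
    case (Suc m)
    { case 1 with Suc gaps[of "Suc m"] show ?case by (auto simp: algebra_simps) }
    { case 2 with Suc gaps[of "Suc m"] show ?case by (auto simp: algebra_simps) }
  qed auto
  have termb: "(\<rho> powr d (Suc m) / D) * (2 * \<epsilon> * d (Suc m)) \<le> 2 * \<epsilon> * (r^m * (d 1 + real m * dmax))"
    if "Suc m \<le> n" for m
  proof -
    have "\<rho> powr d (Suc m) \<le> \<rho> powr (d 1 + real m * dmin)"
      using lo[OF that] rho by (intro powr_mono') auto
    also have "\<dots> = \<rho> powr d 1 * r^m"
    proof -
      have "r^m = \<rho> powr (dmin * real m)"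
        using powr_realpow[of "\<rho> powr dmin" m] rho unfolding r_def by (simp add: powr_powr)
      then show ?thesis by (simp add: powr_add mult.commute)
    qed
    also have "\<dots> \<le> r^m"
      using rho r dnn[of 1] powr_mono'[of 0 "d 1" \<rho>] by (intro mult_left_le_one_le) auto
    finally have p: "\<rho> powr d (Suc m) \<le> r^m" .
    have "\<rho> powr d (Suc m) / D \<le> \<rho> powr d (Suc m)" using D rho by (simp add: divide_le_eq mult_le_cancel_left1)
    also have "\<dots> \<le> r^m" by (rule p)
    finally have a: "\<rho> powr d (Suc m) / D \<le> r^m" .
    have "(\<rho> powr d (Suc m) / D) * (2 * \<epsilon> * d (Suc m)) \<le> r^m * (2 * \<epsilon> * (d 1 + real m * dmax))"
      using D dnn[of "Suc m"] eps hi[OF that] r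
      by (intro mult_mono a) (auto)
    then show ?thesis by (simp add: algebra_simps)
  qed
  have "(\<Sum>i=1..n. (\<rho> powr d i / D) * (2 * \<epsilon> * d i)) = (\<Sum>m<n. (\<rho> powr d (Suc m) / D) * (2 * \<epsilon> * d (Suc m)))"
    by (simp add: sum.atLeast1_atMost_eq)
  also have "\<dots> \<le> (\<Sum>m<n. 2 * \<epsilon> * (r^m * (d 1 + real m * dmax)))"
    by (intro sum_mono termb) auto
  also have "\<dots> = 2 * \<epsilon> * (d 1 * (\<Sum>m<n. r^m) + dmax * (\<Sum>m<n. real m * r^m))"
    by (simp add: sum_distrib_left sum.distrib algebra_simps)
  also have "\<dots> \<le> 2 * \<epsilon> * (d 1 * (1/(1-r)) + dmax * (r/(1-r)^2))"
    using eps dnn[of 1] dmax geo_sum_bound[of r n] ari_geo_sum_bound[of r n] r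
    by (intro mult_left_mono add_mono) auto
  finally show ?thesis unfolding D_def r_def by simp
qed
theorem theorem3:
  fixes z :: "real ^ 'nx" and v :: "real ^ 'nu"
    and x :: "nat \<Rightarrow> real ^ 'nx" and u :: "nat \<Rightarrow> real ^ 'nu"
    and n :: nat and \<rho> \<epsilon> :: real
    and M :: "'w measure" and s :: "nat \<Rightarrow> 'w \<Rightarrow> real"
    and d :: "nat \<Rightarrow> real" and dmin dmax :: real
  assumes n2: "n \<ge> 2"
    and d_def: "\<And>i. d i = norm ((z, v) - (x i, u i))"
    and sorted: "\<And>i. 1 \<le> i \<Longrightarrow> i < n \<Longrightarrow> d i \<le> d (Suc i)"
    and dmin_def: "dmin = Min ((\<lambda>i. d (Suc i) - d i) ` {1..<n})"
    and dmax_def: "dmax = Max ((\<lambda>i. d (Suc i) - d i) ` {1..<n})"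
    and dmin_pos: "dmin > 0"
    and rho: "0 < \<rho>" "\<rho> < 1"
    and eps: "\<epsilon> > 0"
    and M: "prob_space M"
    and rv: "\<And>i. i \<in> {0..n} \<Longrightarrow> s i \<in> borel_measurable M"
    and indep: "prob_space.indep_vars M (\<lambda>_. borel) s {0..n}"
    and tv: "\<And>i. i \<in> {1..n} \<Longrightarrow>
               tv_dist (distr M borel (s i)) (distr M borel (s 0)) \<le> \<epsilon> * d i"
  shows "(\<Sum>i=1..n. (\<rho> powr d i / (1 + (\<Sum>j=1..n. \<rho> powr d j))) *
            tv_dist (distr M (PiM {0..n} (\<lambda>_. borel)) (\<lambda>\<omega>. \<lambda>j\<in>{0..n}. s (swap_idx i j) \<omega>))
                    (distr M (PiM {0..n} (\<lambda>_. borel)) (\<lambda>\<omega>. \<lambda>j\<in>{0..n}. s j \<omega>)))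
         \<le> (\<Sum>i=1..n. (\<rho> powr d i / (1 + (\<Sum>j=1..n. \<rho> powr d j))) * (2 * \<epsilon> * d i))
       \<and> (\<Sum>i=1..n. (\<rho> powr d i / (1 + (\<Sum>j=1..n. \<rho> powr d j))) * (2 * \<epsilon> * d i))
         \<le> 2 * \<epsilon> * (d 1 / (1 - \<rho> powr dmin) + dmax * \<rho> powr dmin / (1 - \<rho> powr dmin)^2)"
  proof -
  interpret M: prob_space M by (rule M)
  define I where "I = {0..n}"
  define s' where "s' j = (if j \<le> n then s j else s 0)" for j
  define N where "N j = distr M borel (s' j)" for j
  have s'm: "s' j \<in> borel_measurable M" for j using rv by (auto simp: s'_def)
  have PN: "prob_space (N j)" for j unfolding N_def by (rule M.prob_space_distr) (rule s'm)
  have sN: "sets (N j) = sets borel" for j by (simp add: N_def)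
  have NI: "j \<in> I \<Longrightarrow> N j = distr M borel (s j)" for j by (simp add: N_def s'_def I_def)
  have rvI: "\<And>j. j \<in> I \<Longrightarrow> s j \<in> borel_measurable M" using rv by (simp add: I_def)
  have Pd: "distr M (PiM I (\<lambda>_. borel)) (\<lambda>\<omega>. \<lambda>j\<in>I. s j \<omega>) = PiM I N"
  proof -
    have "distr M (PiM I (\<lambda>_. borel)) (\<lambda>\<omega>. \<lambda>j\<in>I. s j \<omega>) = PiM I (\<lambda>j. distr M borel (s j))"
      using M.indep_vars_iff_distr_eq_PiM'[where I=I and M'="\<lambda>_. borel" and X=s] indep rvI
      by (auto simp: I_def)
    also have "\<dots> = PiM I N" by (rule PiM_cong) (auto simp: NI)
    finally show ?thesis .
  qed
  have swI: "swap_idx i j \<in> I" if "i \<in> I" "j \<in> I" for i j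
    using that by (auto simp: swap_idx_def I_def)
  have tvb: "tv_dist (distr M (PiM I (\<lambda>_. borel)) (\<lambda>\<omega>. \<lambda>j\<in>I. s (swap_idx i j) \<omega>))
                    (distr M (PiM I (\<lambda>_. borel)) (\<lambda>\<omega>. \<lambda>j\<in>I. s j \<omega>)) \<le> 2 * \<epsilon> * d i"
    if i: "i \<in> {1..n}" for i
  proof -
    define \<sigma> where "\<sigma> = swap_idx i"
    have iI: "i \<in> I" and i0: "i \<noteq> 0" using i by (auto simp: I_def)
    have \<sigma>I: "\<sigma> \<in> I \<rightarrow> I" using swI[OF iI] by (auto simp: \<sigma>_def)
    have \<sigma>inj: "inj_on \<sigma> I" by (auto simp: \<sigma>_def swap_idx_def inj_on_def split: if_splits)
    have fm: "(\<lambda>\<omega>. \<lambda>j\<in>I. s j \<omega>) \<in> measurable M (PiM I (\<lambda>_. borel))"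
      using rvI by (intro measurable_restrict) auto
    have gm: "(\<lambda>f. \<lambda>j\<in>I. f (\<sigma> j)) \<in> measurable (PiM I (\<lambda>_. borel)) (PiM I (\<lambda>_. borel :: real measure))"
      using \<sigma>I by (intro measurable_restrict measurable_component_singleton) auto
    define Q where "Q = PiM I (\<lambda>j. N (\<sigma> j))"
    define R where "R = PiM I (N(i := N 0))"
    define P where "P = PiM I N"
    have Qd: "distr M (PiM I (\<lambda>_. borel)) (\<lambda>\<omega>. \<lambda>j\<in>I. s (\<sigma> j) \<omega>) = Q"
    proof -
      have "distr M (PiM I (\<lambda>_. borel)) (\<lambda>\<omega>. \<lambda>j\<in>I. s (\<sigma> j) \<omega>)
          = distr M (PiM I (\<lambda>_. borel)) ((\<lambda>f. \<lambda>j\<in>I. f (\<sigma> j)) \<circ> (\<lambda>\<omega>. \<lambda>j\<in>I. s j \<omega>))"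
        using \<sigma>I by (intro distr_cong) (auto simp: fun_eq_iff)
      also have "\<dots> = distr (distr M (PiM I (\<lambda>_. borel)) (\<lambda>\<omega>. \<lambda>j\<in>I. s j \<omega>)) (PiM I (\<lambda>_. borel))
                      (\<lambda>f. \<lambda>j\<in>I. f (\<sigma> j))"
        by (rule distr_distr[symmetric, OF gm fm])
      also have "\<dots> = distr (PiM I N) (PiM I (\<lambda>j. N (\<sigma> j))) (\<lambda>f. \<lambda>j\<in>I. f (\<sigma> j))"
        unfolding Pd by (intro distr_cong) (auto intro!: sets_PiM_cong simp: sN)
      also have "\<dots> = Q" unfolding Q_def
        by (rule distr_PiM_reindex[OF PN \<sigma>inj \<sigma>I])
      finally show ?thesis .
    qed
    have tvN: "tv_dist (N i) (N 0) \<le> \<epsilon> * d i" using tv[OF i] NI[OF iI] NI[of 0] by (simp add: I_def)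
    have sQ: "sets Q = sets (PiM I (\<lambda>_. borel))" unfolding Q_def
      by (intro sets_PiM_cong) (auto simp: sN)
    show ?thesis
      unfolding \<sigma>_def[symmetric] Qd Pd P_def[symmetric]
    proof (rule tv_le)
      fix A assume A: "A \<in> sets Q"
      have 1: "\<bar>measure Q A - measure R A\<bar> \<le> tv_dist (N i) (N 0)"
      proof -
        have "\<bar>measure Q A - measure R A\<bar> \<le> tv_dist (N (\<sigma> 0)) ((N(i := N 0)) 0)"
          unfolding Q_def R_def
          by (rule one_coord) (use A PN i0 in \<open>auto simp: Q_def I_def \<sigma>_def swap_idx_def sN\<close>)
        then show ?thesis using i0 by (simp add: \<sigma>_def swap_idx_def)
      qed
      have 2: "\<bar>measure P A - measure R A\<bar> \<le> tv_dist (N i) (N 0)"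
      proof -
        have AP: "A \<in> sets P" using A sQ unfolding P_def
          by (simp add: sets_PiM_cong[OF refl, of I N "\<lambda>_. borel"] sN)
        have "\<bar>measure P A - measure R A\<bar> \<le> tv_dist (N i) ((N(i := N 0)) i)"
          unfolding P_def R_def
          by (rule one_coord) (use AP PN iI in \<open>auto simp: P_def I_def sN\<close>)
        then show ?thesis by simp
      qed
      show "\<bar>measure Q A - measure P A\<bar> \<le> 2 * \<epsilon> * d i"
        using 1 2 tvN by linarith
    qed
  qed
  have dnn: "d i \<ge> 0" for i by (simp add: d_def)
  have fin: "finite ((\<lambda>i. d (Suc i) - d i) ` {1..<n})" by simp
  have gaps: "dmin \<le> d (Suc m) - d m \<and> d (Suc m) - d m \<le> dmax" if "1 \<le> m" "m < n" for m
    unfolding dmin_def dmax_def using that by (auto intro!: Min_le Max_ge)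
  have dmax: "dmax \<ge> 0" using gaps[of 1] n2 dmin_pos by auto
  show ?thesis
  proof
    show "(\<Sum>i=1..n. (\<rho> powr d i / (1 + (\<Sum>j=1..n. \<rho> powr d j))) *
            tv_dist (distr M (PiM {0..n} (\<lambda>_. borel)) (\<lambda>\<omega>. \<lambda>j\<in>{0..n}. s (swap_idx i j) \<omega>))
                    (distr M (PiM {0..n} (\<lambda>_. borel)) (\<lambda>\<omega>. \<lambda>j\<in>{0..n}. s j \<omega>)))
         \<le> (\<Sum>i=1..n. (\<rho> powr d i / (1 + (\<Sum>j=1..n. \<rho> powr d j))) * (2 * \<epsilon> * d i))"
      using tvb rho by (intro sum_mono mult_left_mono) (auto simp: I_def intro!: divide_nonneg_nonneg add_nonneg_nonneg sum_nonneg)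
    show "(\<Sum>i=1..n. (\<rho> powr d i / (1 + (\<Sum>j=1..n. \<rho> powr d j))) * (2 * \<epsilon> * d i))
         \<le> 2 * \<epsilon> * (d 1 / (1 - \<rho> powr dmin) + dmax * \<rho> powr dmin / (1 - \<rho> powr dmin)^2)"
      by (rule part2[where d=d and n=n, OF rho eps dnn gaps dmin_pos dmax])
  qed
qed

end
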